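(* Let $n\ge 0$, let $T$ be a triangulation of a regular polygon with $n+3$ vertices, let $\alpha,\alpha'$ be positive roots and write $S=\operatorname{Supp}\alpha$, $S'=\operatorname{Supp}\alpha'$. Then $\operatorname{Hom}_{\operatorname{Mod}{Q}_T}((M^\alpha,f^\alpha),(M^{\alpha'},f^{\alpha'}))\neq 0$ if and only if the following hold: (i) $S\cap S'\neq\emptyset$; (ii) there is no arrow in ${Q}_T$ from a vertex of $S\setminus S'$ to a vertex of $S\cap S'$; (iii) there is no arrow in ${Q}_T$ from a vertex of $S\cap S'$ to a vertex of $S'\setminus S$. In this case this Hom space is one-dimensional.
   Context: Diagonals of the polygon are called roots; those in $T$ are negative roots, indexed by a set $I$ (the one indexed by $i$ written $-\alpha_i$), and the others positive roots. $\operatorname{Supp}\alpha$ is the set of $i\in I$ with $-\alpha_i$ crossing $\alpha$. If $-\alpha_i,-\alpha_j$ bound a common triangle of $T$ with common vertex $x$, set $-\alpha_i<-\alpha_j$ if the minimal-angle rotation about $x$ sending the line through $-\alpha_i$ to that through $-\alpha_j$ is counterclockwise. ${Q}_T$ has vertex set $I$ and an arrow $j\to i$ whenever $-\alpha_i,-\alpha_j$ bound a common triangle and $-\alpha_i<-\alpha_j$. $\operatorname{Mod}{Q}_T$ is the category of finite-dimensional complex representations of ${Q}_T$ in which the composition of any two successive arrows in a triangle of ${Q}_T$ is zero. For a positive root $\alpha$, $(M^\alpha,f^\alpha)$ is the representation with $M^\alpha_i=\mathbb{C}$ for $i\in\operatorname{Supp}\alpha$, $M^\alpha_i=0$ otherwise,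 and $f^\alpha_{ij}=\mathrm{id}_{\mathbb{C}}$ on arrows between vertices of $\operatorname{Supp}\alpha$, $0$ otherwise. *)

theory Defs
  imports "Jordan_Normal_Form.Matrix"
begin

section \<open>Polygon with N vertices 0,...,N-1 labelled counterclockwise\<close>

definition poly_edge :: "nat \<Rightarrow> nat set \<Rightarrow> bool" where
  "poly_edge N e \<longleftrightarrow> (\<exists>a b. e = {a, b} \<and> a < b \<and> b < N \<and> (b = a + 1 \<or> (a = 0 \<and> b = N - 1)))"

text \<open>Diagonals (= roots): segments between two non-adjacent vertices.\<close>
definition is_diag :: "nat \<Rightarrow> nat set \<Rightarrow> bool" where
  "is_diag N d \<longleftrightarrow> (\<exists>a b. d = {a, b} \<and> a + 2 \<le> b \<and> b < N \<and> \<not> (a = 0 \<and> b = N - 1))"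

text \<open>Two diagonals cross (in the interior of the polygon) iff their endpoints strictly interleave.\<close>
definition crosses :: "nat set \<Rightarrow> nat set \<Rightarrow> bool" where
  "crosses d e \<longleftrightarrow> (\<exists>a b c c'. d = {a, b} \<and> e = {c, c'} \<and> a < c \<and> c < b \<and> (c' < a \<or> b < c'))"

definition triangulation :: "nat \<Rightarrow> nat set set \<Rightarrow> bool" where
  "triangulation N T \<longleftrightarrow>
     (\<forall>d\<in>T. is_diag N d) \<and>
     (\<forall>d\<in>T. \<forall>e\<in>T. \<not> crosses d e) \<and>
     (\<forall>d. is_diag N d \<and> d \<notin> T \<longrightarrow> (\<exists>e\<in>T. crosses d e))"

text \<open>Negative roots are the diagonals in T (indexed by I = T itself); positive roots are the
  other diagonals.\<close>
definition positive_root :: "nat \<Rightarrow> nat set set \<Rightarrow> nat set \<Rightarrow> bool" where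
  "positive_root N T \<alpha> \<longleftrightarrow> is_diag N \<alpha> \<and> \<alpha> \<notin> T"

definition Supp :: "nat set set \<Rightarrow> nat set \<Rightarrow> nat set set" where
  "Supp T \<alpha> = {i \<in> T. crosses i \<alpha>}"

text \<open>Arrow j \<rightarrow> i of Q_T: the diagonals i = {x,y} and j = {x,z} of T bound a common triangle
  {x,y,z} of T (third side {y,z} a polygon side or in T), and -alpha_i < -alpha_j, i.e. the
  rotation about x taking the ray x-y to the ray x-z (through the angle of the triangle) is
  counterclockwise, i.e. z comes after y in counterclockwise order seen from x.\<close>
definition arrow :: "nat \<Rightarrow> nat set set \<Rightarrow> nat set \<Rightarrow> nat set \<Rightarrow> bool" where
  "arrow N T j i \<longleftrightarrow> i \<in> T \<and> j \<in> T \<and>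
     (\<exists>x y z. i = {x, y} \<and> j = {x, z} \<and> y \<noteq> z \<and>
        ({y, z} \<in> T \<or> poly_edge N {y, z}) \<and>
        (y + N - x) mod N < (z + N - x) mod N)"

text \<open>A representation is given by a dimension vector d (M_i = C^(d i)) and, for each arrow
  j \<rightarrow> i, a matrix f j i of size d i \<times> d j.  A morphism (M,f) \<rightarrow> (M',g) is a family of
  matrices phi i of size d' i \<times> d i (i \<in> I, extended by a dummy value outside I) with
  g_a phi_j = phi_i f_a for each arrow a : j \<rightarrow> i.\<close>
definition rep_Hom ::
  "'v set \<Rightarrow> ('v \<Rightarrow> 'v \<Rightarrow> bool) \<Rightarrow> ('v \<Rightarrow> nat) \<Rightarrow> ('v \<Rightarrow> 'v \<Rightarrow> complex mat)
     \<Rightarrow> ('v \<Rightarrow> nat) \<Rightarrow> ('v \<Rightarrow> 'v \<Rightarrow> complex mat) \<Rightarrow> ('v \<Rightarrow> complex mat) set" where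
  "rep_Hom I Q d f d' g =
     {\<phi>. (\<forall>i\<in>I. \<phi> i \<in> carrier_mat (d' i) (d i)) \<and> (\<forall>i. i \<notin> I \<longrightarrow> \<phi> i = 0\<^sub>m 0 0) \<and>
          (\<forall>i\<in>I. \<forall>j\<in>I. Q j i \<longrightarrow> g j i * \<phi> j = \<phi> i * f j i)}"

definition rep_Hom_zero :: "'v set \<Rightarrow> ('v \<Rightarrow> nat) \<Rightarrow> ('v \<Rightarrow> nat) \<Rightarrow> 'v \<Rightarrow> complex mat" where
  "rep_Hom_zero I d d' = (\<lambda>i. if i \<in> I then 0\<^sub>m (d' i) (d i) else 0\<^sub>m 0 0)"

definition one_dimensional :: "('v \<Rightarrow> complex mat) set \<Rightarrow> ('v \<Rightarrow> complex mat) \<Rightarrow> bool" where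
  "one_dimensional H z \<longleftrightarrow> (\<exists>\<psi>\<in>H. \<psi> \<noteq> z \<and> H = {(\<lambda>i. c \<cdot>\<^sub>m \<psi> i) | c. True})"

definition M_dim :: "nat set set \<Rightarrow> nat set \<Rightarrow> nat set \<Rightarrow> nat" where
  "M_dim T \<alpha> i = (if i \<in> Supp T \<alpha> then 1 else 0)"

definition M_map :: "nat set set \<Rightarrow> nat set \<Rightarrow> nat set \<Rightarrow> nat set \<Rightarrow> complex mat" where
  "M_map T \<alpha> j i = (if j \<in> Supp T \<alpha> \<and> i \<in> Supp T \<alpha> then 1\<^sub>m 1
                     else 0\<^sub>m (M_dim T \<alpha> i) (M_dim T \<alpha> j))"

definition HomM :: "nat \<Rightarrow> nat set set \<Rightarrow> nat set \<Rightarrow> nat set \<Rightarrow> (nat set \<Rightarrow> complex mat) set" where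
  "HomM N T \<alpha> \<alpha>' = rep_Hom T (arrow N T) (M_dim T \<alpha>) (M_map T \<alpha>) (M_dim T \<alpha>') (M_map T \<alpha>')"

definition HomM_zero :: "nat set set \<Rightarrow> nat set \<Rightarrow> nat set \<Rightarrow> nat set \<Rightarrow> complex mat" where
  "HomM_zero T \<alpha> \<alpha>' = rep_Hom_zero T (M_dim T \<alpha>) (M_dim T \<alpha>')"

end

theory Submission
  imports Defs
begin


definition TE :: "nat \<Rightarrow> nat set set \<Rightarrow> nat set \<Rightarrow> bool" where
  "TE N T e \<longleftrightarrow> e \<in> T \<or> poly_edge N e"

definition adj :: "nat \<Rightarrow> nat set set \<Rightarrow> nat set \<Rightarrow> nat set \<Rightarrow> bool" where
  "adj N T d e \<longleftrightarrow> (\<exists>x y z. d = {x,y} \<and> e = {x,z} \<and> y \<noteq> z \<and> x < N \<and> y < N \<and> z < N \<and> TE N T {y,z})"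

definition crel :: "nat \<Rightarrow> nat set set \<Rightarrow> nat set \<Rightarrow> nat set \<Rightarrow> (nat set \<times> nat set) set" where
  "crel N T \<alpha> \<beta> = {(d,e). d \<in> T \<and> e \<in> T \<and> crosses d \<alpha> \<and> crosses d \<beta> \<and> crosses e \<alpha> \<and> crosses e \<beta> \<and> adj N T d e}"

lemma crosses_lt:
  assumes "a < b"
  shows "crosses {a,b} e \<longleftrightarrow> (\<exists>c c'. e = {c,c'} \<and> a < c \<and> c < b \<and> (c' < a \<or> b < c'))"
proof
  assume "crosses {a,b} e"
  then obtain a0 b0 c c' where h: "{a,b} = {a0,b0}" "e = {c,c'}" "a0 < c" "c < b0" "c' < a0 \<or> b0 < c'"
    unfolding crosses_def by blast
  then have "a0 = a \<and> b0 = b" using assms by (auto simp: doubleton_eq_iff)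
  then show "\<exists>c c'. e = {c,c'} \<and> a < c \<and> c < b \<and> (c' < a \<or> b < c')" using h by blast
next
  assume "\<exists>c c'. e = {c,c'} \<and> a < c \<and> c < b \<and> (c' < a \<or> b < c')"
  then show "crosses {a,b} e" unfolding crosses_def by blast
qed

lemma crossesI: "a < c \<Longrightarrow> c < b \<Longrightarrow> c' < a \<or> b < c' \<Longrightarrow> crosses {a,b} {c,c'}"
  unfolding crosses_def by blast

lemma crosses_sym: assumes "crosses d e" shows "crosses e d"
proof -
  obtain a b c c' where h: "d = {a,b}" "e = {c,c'}" "a < c" "c < b" "c' < a \<or> b < c'"
    using assms unfolding crosses_def by blast
  show ?thesis
  proof (cases "c' < a")
    case True
    have "crosses {c',c} {a,b}" by (rule crossesI) (use h True in auto)
    then show ?thesis using h by (simp add: insert_commute)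
  next
    case False
    then have "b < c'" using h by auto
    have "crosses {c,c'} {b,a}" by (rule crossesI) (use h \<open>b < c'\<close> in auto)
    then show ?thesis using h by (simp add: insert_commute)
  qed
qed

lemma edge_lt: "poly_edge N {a,b} \<Longrightarrow> a < b \<Longrightarrow> b < N \<and> (b = a + 1 \<or> (a = 0 \<and> b = N - 1))"
  unfolding poly_edge_def by (auto simp: doubleton_eq_iff)

lemma diag_lt: "is_diag N {a,b} \<Longrightarrow> a < b \<Longrightarrow> a + 2 \<le> b \<and> b < N"
  unfolding is_diag_def by (auto simp: doubleton_eq_iff)

lemma diag_ex: "is_diag N d \<Longrightarrow> \<exists>a b. d = {a,b} \<and> a + 2 \<le> b \<and> b < N"
  unfolding is_diag_def by auto

lemma edge_nocross:
  assumes "poly_edge N e" "e' \<subseteq> {..<N}"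
  shows "\<not> crosses e e'"
proof
  assume c: "crosses e e'"
  obtain a b where ab: "e = {a,b}" "a < b" "b < N" "b = a + 1 \<or> (a = 0 \<and> b = N - 1)"
    using assms(1) unfolding poly_edge_def by blast
  obtain x y where xy: "e' = {x,y}" "a < x" "x < b" "y < a \<or> b < y"
    using c ab crosses_lt[of a b e'] by auto
  have "y < N" using assms(2) xy by auto
  then show False using ab xy by auto
qed

lemma T_diag: "triangulation N T \<Longrightarrow> d \<in> T \<Longrightarrow> is_diag N d"
  unfolding triangulation_def by blast

lemma T_nc: "triangulation N T \<Longrightarrow> d \<in> T \<Longrightarrow> e \<in> T \<Longrightarrow> \<not> crosses d e"
  unfolding triangulation_def by blast

lemma diag_sub: "is_diag N d \<Longrightarrow> d \<subseteq> {..<N}"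
  unfolding is_diag_def by auto

lemma TE_nc:
  assumes tri: "triangulation N T" and "TE N T e" "d \<in> T"
  shows "\<not> crosses e d \<and> \<not> crosses d e"
proof (cases "e \<in> T")
  case True
  then show ?thesis using T_nc[OF tri] assms by blast
next
  case False
  then have pe: "poly_edge N e" using assms unfolding TE_def by blast
  have "d \<subseteq> {..<N}" using diag_sub T_diag[OF tri assms(3)] by blast
  then have "\<not> crosses e d" using edge_nocross pe by blast
  then show ?thesis using crosses_sym by blast
qed

lemma inner_tri:
  assumes tri: "triangulation N T" and pq: "p + 2 \<le> q" "q < N"
    and nc: "\<forall>e\<in>T. \<not> crosses {p,q} e"
  shows "\<exists>w. p < w \<and> w < q \<and> TE N T {p,w} \<and> TE N T {w,q}"
proof -
  define W where "W = {w. p < w \<and> w < q \<and> ({p,w} \<in> T \<or> w = p + 1)}"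
  have fin: "finite W" unfolding W_def by (rule finite_subset[of _ "{..<q}"]) auto
  have "p + 1 \<in> W" using pq unfolding W_def by auto
  define w where "w = Max W"
  have wW: "w \<in> W" unfolding w_def using fin \<open>p + 1 \<in> W\<close> Max_in by blast
  have wmax: "\<And>w'. w' \<in> W \<Longrightarrow> w' \<le> w" unfolding w_def using fin Max_ge by blast
  have w: "p < w" "w < q" "{p,w} \<in> T \<or> w = p + 1" using wW unfolding W_def by auto
  have TEpw: "TE N T {p,w}"
  proof (cases "{p,w} \<in> T")
    case True then show ?thesis unfolding TE_def by blast
  next
    case False
    then have "w = p + 1" using w by blast
    then have "poly_edge N {p,w}" unfolding poly_edge_def using pq w by (intro exI[of _ p] exI[of _ w]) auto
    then show ?thesis unfolding TE_def by blast
  qed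
  show ?thesis
  proof (cases "w + 1 = q")
    case True
    then have "poly_edge N {w,q}" unfolding poly_edge_def using pq w by auto
    then show ?thesis using TEpw w unfolding TE_def by blast
  next
    case False
    then have "w + 2 \<le> q" using w by auto
    have diag: "is_diag N {w,q}" unfolding is_diag_def
      using \<open>w + 2 \<le> q\<close> pq w by auto
    show ?thesis
    proof (cases "{w,q} \<in> T")
      case True
      then show ?thesis using TEpw w unfolding TE_def by blast
    next
      case False
      then obtain e where e: "e \<in> T" "crosses {w,q} e" using tri diag unfolding triangulation_def by blast
      then obtain c c' where cc: "e = {c,c'}" "w < c" "c < q" "c' < w \<or> q < c'"
        using crosses_lt[of w q e] w by auto
      have "\<not> crosses {p,q} {c,c'}" using nc e cc by blast
      then have "\<not> (c' < p \<or> q < c')" using crossesI[of p c q c'] cc w by auto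
      then have c'1: "p \<le> c'" "c' < w" using cc by auto
      have "c' = p"
      proof (rule ccontr)
        assume "c' \<noteq> p"
        then have "p < c'" using c'1 by auto
        then have "w \<noteq> p + 1" using c'1 by auto
        then have "{p,w} \<in> T" using w by blast
        have "crosses {p,w} {c',c}" by (rule crossesI) (use \<open>p < c'\<close> c'1 cc in auto)
        moreover have "{c',c} \<in> T" using e cc by (simp add: insert_commute)
        ultimately show False using T_nc[OF tri \<open>{p,w} \<in> T\<close>] by blast
      qed
      then have "{p,c} \<in> T" using e cc by (simp add: insert_commute)
      then have "c \<in> W" unfolding W_def using cc w by auto
      then show ?thesis using wmax cc by fastforce
    qed
  qed
qed

lemma cross_nested:
  assumes "crosses {p,q} g" "crosses {r,s} g" "p \<le> r" "r < s" "s \<le> q"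
    "p \<le> u" "u \<le> r" "s \<le> v" "v \<le> q"
  shows "crosses {u,v} g"
proof -
  obtain c c' where c: "g = {c,c'}" "r < c" "c < s" "c' < r \<or> s < c'"
    using assms crosses_lt[of r s g] by auto
  obtain d d' where d: "g = {d,d'}" "p < d" "d < q" "d' < p \<or> q < d'"
    using assms crosses_lt[of p q g] by auto
  have "c' < p \<or> q < c'" using c d assms by (auto simp: doubleton_eq_iff)
  then show ?thesis using c assms crossesI[of u c v c'] by auto
qed

lemma cross_disj:
  assumes "crosses {p,q} g" "crosses {r,s} g" "p < q" "q \<le> r" "r < s"
  shows "\<exists>c c'. g = {c,c'} \<and> p < c \<and> c < q \<and> r < c' \<and> c' < s"
proof -
  obtain c c' where c: "g = {c,c'}" "p < c" "c < q" "c' < p \<or> q < c'"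
    using assms crosses_lt[of p q g] by auto
  obtain d d' where d: "g = {d,d'}" "r < d" "d < s" "d' < r \<or> s < d'"
    using assms crosses_lt[of r s g] by auto
  show ?thesis using c d assms by (auto simp: doubleton_eq_iff)
qed

lemma adj_sym: "adj N T d e \<Longrightarrow> adj N T e d"
proof -
  assume "adj N T d e"
  then obtain x y z where h: "d = {x,y}" "e = {x,z}" "y \<noteq> z" "x < N" "y < N" "z < N" "TE N T {y,z}"
    unfolding adj_def by blast
  show "adj N T e d" unfolding adj_def
    by (intro exI[of _ x] exI[of _ z] exI[of _ y]) (use h in \<open>auto simp: insert_commute\<close>)
qed

lemma adjI: "y \<noteq> z \<Longrightarrow> x < N \<Longrightarrow> y < N \<Longrightarrow> z < N \<Longrightarrow> TE N T {y,z} \<Longrightarrow> adj N T {x,y} {x,z}"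
  unfolding adj_def by blast

lemma crel_sym: "(d,e) \<in> crel N T a b \<Longrightarrow> (e,d) \<in> crel N T a b"
  unfolding crel_def using adj_sym by blast

lemma crel_rtr_sym: "(d,e) \<in> (crel N T a b)\<^sup>* \<Longrightarrow> (e,d) \<in> (crel N T a b)\<^sup>*"
  using sym_rtrancl[of "crel N T a b"] crel_sym unfolding sym_def by blast

lemma nested:
  assumes tri: "triangulation N T"
  shows "{p,q} \<in> T \<Longrightarrow> {r,s} \<in> T \<Longrightarrow> p \<le> r \<Longrightarrow> r < s \<Longrightarrow> s \<le> q \<Longrightarrow>
    crosses {p,q} a \<Longrightarrow> crosses {p,q} b \<Longrightarrow> crosses {r,s} a \<Longrightarrow> crosses {r,s} b \<Longrightarrow>
    ({p,q},{r,s}) \<in> (crel N T a b)\<^sup>*"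
proof (induction "q - p" arbitrary: p q rule: less_induct)
  case less
  show ?case
  proof (cases "p = r \<and> q = s")
    case True then show ?thesis by simp
  next
    case False
    have pq: "p + 2 \<le> q" "q < N" using diag_lt[OF T_diag[OF tri less.prems(1)]] less.prems by auto
    have rs: "r + 2 \<le> s" "s < N" using diag_lt[OF T_diag[OF tri less.prems(2)]] less.prems by auto
    have nc: "\<forall>e\<in>T. \<not> crosses {p,q} e" using T_nc[OF tri less.prems(1)] by blast
    obtain w where w: "p < w" "w < q" "TE N T {p,w}" "TE N T {w,q}"
      using inner_tri[OF tri pq nc] by blast
    have nc1: "\<not> crosses {p,w} {r,s}" using TE_nc[OF tri w(3) less.prems(2)] by blast
    have nc2: "\<not> crosses {w,q} {r,s}" using TE_nc[OF tri w(4) less.prems(2)] by blast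
    have "s \<le> w \<or> w \<le> r"
    proof (rule ccontr)
      assume "\<not> (s \<le> w \<or> w \<le> r)"
      then have h: "r < w" "w < s" by auto
      show False
      proof (cases "p < r")
        case True
        have "crosses {p,w} {r,s}" by (rule crossesI) (use True h in auto)
        then show False using nc1 by blast
      next
        case False
        then have "p = r" using less.prems by auto
        then have "s < q" using \<open>\<not> (p = r \<and> q = s)\<close> less.prems by auto
        have "crosses {w,q} {s,r}" by (rule crossesI) (use \<open>p = r\<close> \<open>s < q\<close> h w in auto)
        then show False using nc2 by (simp add: insert_commute)
      qed
    qed
    then show ?thesis
    proof
      assume sw: "s \<le> w"
      have "\<not> poly_edge N {p,w}" using edge_lt[of N p w] w pq rs sw less.prems by auto
      then have inT: "{p,w} \<in> T" using w unfolding TE_def by blast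
      have ca: "crosses {p,w} a" by (rule cross_nested[of p q a r s]) (use less.prems sw w in auto)
      have cb: "crosses {p,w} b" by (rule cross_nested[of p q b r s]) (use less.prems sw w in auto)
      have IH: "({p,w},{r,s}) \<in> (crel N T a b)\<^sup>*"
        by (rule less.hyps[of w p]) (use w less.prems sw inT ca cb in auto)
      have "adj N T {p,q} {p,w}" unfolding adj_def
        using w pq by (intro exI[of _ p] exI[of _ q] exI[of _ w]) (auto simp: insert_commute)
      then have "({p,q},{p,w}) \<in> crel N T a b" unfolding crel_def using less.prems inT ca cb by auto
      then show ?thesis using IH converse_rtrancl_into_rtrancl by metis
    next
      assume wr: "w \<le> r"
      have "\<not> poly_edge N {w,q}" using edge_lt[of N w q] w pq rs wr less.prems by auto
      then have inT: "{w,q} \<in> T" using w unfolding TE_def by blast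
      have ca: "crosses {w,q} a" by (rule cross_nested[of p q a r s]) (use less.prems wr w in auto)
      have cb: "crosses {w,q} b" by (rule cross_nested[of p q b r s]) (use less.prems wr w in auto)
      have IH: "({w,q},{r,s}) \<in> (crel N T a b)\<^sup>*"
        by (rule less.hyps[of q w]) (use w less.prems wr inT ca cb in auto)
      have "adj N T {p,q} {w,q}" unfolding adj_def
        using w pq by (intro exI[of _ q] exI[of _ p] exI[of _ w]) (auto simp: insert_commute)
      then have "({p,q},{w,q}) \<in> crel N T a b" unfolding crel_def using less.prems inT ca cb by auto
      then show ?thesis using IH converse_rtrancl_into_rtrancl by metis
    qed
  qed
qed

lemma disjoint:
  assumes tri: "triangulation N T" and T1: "{p,q} \<in> T" and T2: "{r,s} \<in> T"
    and o: "p < q" "q \<le> r" "r < s"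
    and c: "crosses {p,q} a" "crosses {p,q} b" "crosses {r,s} a" "crosses {r,s} b"
  shows "({p,q},{r,s}) \<in> (crel N T a b)\<^sup>*"
proof -
  have pq: "p + 2 \<le> q" "q < N" using diag_lt[OF T_diag[OF tri T1]] o by auto
  have rs: "r + 2 \<le> s" "s < N" using diag_lt[OF T_diag[OF tri T2]] o by auto
  define P where "P = (\<lambda>(u::nat,v::nat). u \<le> p \<and> s \<le> v \<and> v < N \<and> ({u,v} \<in> T \<or> (u = 0 \<and> v = N - 1)))"
  have "P (0, N - 1)" unfolding P_def using rs by auto
  then have "\<exists>x. P x \<and> (\<forall>y. P y \<longrightarrow> snd x - fst x \<le> snd y - fst y)"
    by (rule ex_has_least_nat)
  then obtain x where x: "P x" "\<And>y. P y \<Longrightarrow> snd x - fst x \<le> snd y - fst y"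
    by blast
  obtain u v where xuv: "x = (u,v)" by (cases x)
  have uv: "u \<le> p" "s \<le> v" "v < N" "{u,v} \<in> T \<or> (u = 0 \<and> v = N - 1)"
    using x(1) unfolding xuv P_def by auto
  have min: "\<And>u' v'. P (u',v') \<Longrightarrow> v - u \<le> v' - u'" using x(2) unfolding xuv by force
  have TEuv: "TE N T {u,v}"
  proof (cases "{u,v} \<in> T")
    case True then show ?thesis unfolding TE_def by blast
  next
    case False
    then have "u = 0" "v = N - 1" using uv by auto
    then have "poly_edge N {u,v}" unfolding poly_edge_def using rs o
      by (intro exI[of _ u] exI[of _ v]) auto
    then show ?thesis unfolding TE_def by blast
  qed
  have nc: "\<forall>e\<in>T. \<not> crosses {u,v} e" using TE_nc[OF tri TEuv] by blast
  obtain w where w: "u < w" "w < v" "TE N T {u,w}" "TE N T {w,v}"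
    using inner_tri[OF tri _ uv(3) nc] uv o by auto
  have qw: "q \<le> w"
  proof (rule ccontr)
    assume "\<not> q \<le> w"
    then have "w < q" by auto
    show False
    proof (cases "w \<le> p")
      case True
      have "\<not> poly_edge N {w,v}" using edge_lt[of N w v] w True o uv by auto
      then have "{w,v} \<in> T" using w unfolding TE_def by blast
      then have "P (w,v)" unfolding P_def using True uv by auto
      then have "v - u \<le> v - w" by (rule min)
      then show False using w(1,2) by linarith
    next
      case False
      have "crosses {p,q} {w,v}" by (rule crossesI) (use False \<open>w < q\<close> o uv in auto)
      then show False using TE_nc[OF tri w(4) T1] by blast
    qed
  qed
  have wr: "w \<le> r"
  proof (rule ccontr)
    assume "\<not> w \<le> r"
    then have "r < w" by auto
    show False
    proof (cases "s \<le> w")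
      case True
      have "\<not> poly_edge N {u,w}" using edge_lt[of N u w] w True o uv by auto
      then have "{u,w} \<in> T" using w unfolding TE_def by blast
      then have "P (u,w)" unfolding P_def using True uv w by auto
      then have "v - u \<le> w - u" by (rule min)
      then show False using w(1,2) by linarith
    next
      case False
      have "crosses {r,s} {w,u}" by (rule crossesI) (use False \<open>r < w\<close> o uv in auto)
      then have "crosses {r,s} {u,w}" by (simp add: insert_commute)
      then show False using TE_nc[OF tri w(3) T2] by blast
    qed
  qed
  have "\<not> poly_edge N {u,w}" using edge_lt[of N u w] w qw wr o pq rs uv by auto
  then have A: "{u,w} \<in> T" using w unfolding TE_def by blast
  have "\<not> poly_edge N {w,v}" using edge_lt[of N w v] w qw wr o pq rs uv by auto
  then have B: "{w,v} \<in> T" using w unfolding TE_def by blast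
  have cr: "crosses {u,w} g \<and> crosses {w,v} g" if g1: "crosses {p,q} g" "crosses {r,s} g" for g
  proof -
    obtain d d' where dd: "g = {d,d'}" "p < d" "d < q" "r < d'" "d' < s"
      using cross_disj[OF g1 o] by blast
    have "crosses {u,w} {d,d'}" by (rule crossesI) (use dd uv qw wr in auto)
    moreover have "crosses {w,v} {d',d}" by (rule crossesI) (use dd uv qw wr in auto)
    ultimately show ?thesis using dd by (simp add: insert_commute)
  qed
  have ca: "crosses {u,w} a" "crosses {w,v} a" using cr c by auto
  have cb: "crosses {u,w} b" "crosses {w,v} b" using cr c by auto
  have c1: "({u,w},{p,q}) \<in> (crel N T a b)\<^sup>*"
    by (rule nested[OF tri]) (use A T1 o uv qw ca cb c in auto)
  have c2: "({w,v},{r,s}) \<in> (crel N T a b)\<^sup>*"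
    by (rule nested[OF tri]) (use B T2 o uv wr ca cb c in auto)
  have "adj N T {w,u} {w,v}" by (rule adjI) (use w uv TEuv in auto)
  then have "adj N T {u,w} {w,v}" by (simp add: insert_commute)
  then have X: "({u,w},{w,v}) \<in> crel N T a b" unfolding crel_def using A B ca cb by auto
  have "({p,q},{w,v}) \<in> (crel N T a b)\<^sup>*"
    by (rule rtrancl_into_rtrancl[OF crel_rtr_sym[OF c1] X])
  then show ?thesis using c2 by (rule rtrancl_trans)
qed

lemma connect:
  assumes tri: "triangulation N T" and dT: "d \<in> T" and eT: "e \<in> T"
    and c: "crosses d a" "crosses d b" "crosses e a" "crosses e b"
  shows "(d,e) \<in> (crel N T a b)\<^sup>*"
proof -
  obtain p q where pq: "d = {p,q}" "p + 2 \<le> q" "q < N" using diag_ex[OF T_diag[OF tri dT]] by blast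
  obtain r s where rs: "e = {r,s}" "r + 2 \<le> s" "s < N" using diag_ex[OF T_diag[OF tri eT]] by blast
  have n1: "\<not> crosses {p,q} {r,s}" and n2: "\<not> crosses {r,s} {p,q}"
    using T_nc[OF tri dT eT] T_nc[OF tri eT dT] pq(1) rs(1) by auto
  have dT': "{p,q} \<in> T" and eT': "{r,s} \<in> T" using dT eT pq(1) rs(1) by auto
  have c': "crosses {p,q} a" "crosses {p,q} b" "crosses {r,s} a" "crosses {r,s} b"
    using c pq(1) rs(1) by auto
  have pq': "p < q" using pq by auto
  have rs': "r < s" using rs by auto
  have "({p,q},{r,s}) \<in> (crel N T a b)\<^sup>*"
  proof (cases "p \<le> r \<and> s \<le> q")
    case True
    show ?thesis by (rule nested[OF tri dT' eT']) (use True pq' rs' c' in auto)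
  next
    case F1: False
    show ?thesis
    proof (cases "r \<le> p \<and> q \<le> s")
      case True
      have "({r,s},{p,q}) \<in> (crel N T a b)\<^sup>*" by (rule nested[OF tri eT' dT']) (use True pq' rs' c' in auto)
      then show ?thesis by (rule crel_rtr_sym)
    next
      case F2: False
      show ?thesis
      proof (cases "q \<le> r")
        case True
        show ?thesis by (rule disjoint[OF tri dT' eT']) (use True pq' rs' c' in auto)
      next
        case F3: False
        show ?thesis
        proof (cases "s \<le> p")
          case True
          have "({r,s},{p,q}) \<in> (crel N T a b)\<^sup>*" by (rule disjoint[OF tri eT' dT']) (use True pq' rs' c' in auto)
          then show ?thesis by (rule crel_rtr_sym)
        next
          case F4: False
          show ?thesis
          proof (cases "p < r")
            case True
            then have "q < s" using F1 F3 by auto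
            have "crosses {p,q} {r,s}" by (rule crossesI) (use True \<open>q < s\<close> F3 in auto)
            then show ?thesis using n1 by contradiction
          next
            case False
            then have "r < p \<or> r = p" by auto
            then show ?thesis
            proof
              assume "r < p"
              then have "s < q" using F2 by auto
              have "crosses {r,s} {p,q}" by (rule crossesI) (use \<open>r < p\<close> \<open>s < q\<close> F4 in auto)
              then show ?thesis using n2 by contradiction
            next
              assume "r = p"
              then have False using F1 F2 by auto
              then show ?thesis by blast
            qed
          qed
        qed
      qed
    qed
  qed
  then show ?thesis using pq(1) rs(1) by simp
qed

lemma modN: "(x::nat) < N \<Longrightarrow> y < N \<Longrightarrow> (y + N - x) mod N = (if x \<le> y then y - x else y + N - x)"
proof (cases "x \<le> y")
  case True
  assume "x < N" "y < N"
  then have e: "y + N - x = (y - x) + N" using True by arith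
  have "(y + N - x) mod N = (y - x) mod N" unfolding e by simp
  also have "\<dots> = y - x" using \<open>y < N\<close> by simp
  finally show ?thesis using True by simp
next
  case False
  assume "x < N" "y < N"
  then show ?thesis using False by simp
qed

lemma adj_arrow:
  assumes "d \<in> T" "e \<in> T" "adj N T d e"
  shows "arrow N T d e \<or> arrow N T e d"
proof -
  obtain x y z where h: "d = {x,y}" "e = {x,z}" "y \<noteq> z" "x < N" "y < N" "z < N" "TE N T {y,z}"
    using assms(3) unfolding adj_def by blast
  have ne: "(y + N - x) mod N \<noteq> (z + N - x) mod N"
    using modN[OF h(4) h(5)] modN[OF h(4) h(6)] h(3) h(4) h(5) h(6) by (auto split: if_splits)
  show ?thesis
  proof (cases "(y + N - x) mod N < (z + N - x) mod N")
    case True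
    have "arrow N T e d" unfolding arrow_def
      using assms h True unfolding TE_def by blast
    then show ?thesis by blast
  next
    case False
    then have "(z + N - x) mod N < (y + N - x) mod N" using ne by auto
    moreover have "TE N T {z,y}" using h by (simp add: insert_commute)
    ultimately have "arrow N T d e" unfolding arrow_def
      using assms h unfolding TE_def by blast
    then show ?thesis by blast
  qed
qed



lemma mult_inner0: "A \<in> carrier_mat n 0 \<Longrightarrow> B \<in> carrier_mat 0 m \<Longrightarrow> A * B = 0\<^sub>m n m"
  by (rule eq_matI) (auto simp: scalar_prod_def)

lemma dim0_eq: "A \<in> carrier_mat n m \<Longrightarrow> B \<in> carrier_mat n m \<Longrightarrow> n = 0 \<or> m = 0 \<Longrightarrow> A = B"
  by (rule eq_matI) auto

lemma mat11: "(A :: complex mat) \<in> carrier_mat 1 1 \<Longrightarrow> A = (A $$ (0,0)) \<cdot>\<^sub>m 1\<^sub>m 1"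
  by (rule eq_matI) auto

lemma M_map_carrier: "M_map T a j i \<in> carrier_mat (M_dim T a i) (M_dim T a j)"
  unfolding M_map_def M_dim_def by auto

theorem mainTheorem12:
  fixes n :: nat and T :: "nat set set" and \<alpha> \<alpha>' :: "nat set"
  assumes "triangulation (n + 3) T"
    and "positive_root (n + 3) T \<alpha>"
    and "positive_root (n + 3) T \<alpha>'"
  defines "S \<equiv> Supp T \<alpha>" and "S' \<equiv> Supp T \<alpha>'"
  shows "(HomM (n + 3) T \<alpha> \<alpha>' \<noteq> {HomM_zero T \<alpha> \<alpha>'} \<longleftrightarrow>
            S \<inter> S' \<noteq> {} \<and>
            \<not> (\<exists>j\<in>S - S'. \<exists>i\<in>S \<inter> S'. arrow (n + 3) T j i) \<and>
            \<not> (\<exists>j\<in>S \<inter> S'. \<exists>i\<in>S' - S. arrow (n + 3) T j i))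
       \<and> (HomM (n + 3) T \<alpha> \<alpha>' \<noteq> {HomM_zero T \<alpha> \<alpha>'} \<longrightarrow>
            one_dimensional (HomM (n + 3) T \<alpha> \<alpha>') (HomM_zero T \<alpha> \<alpha>'))"
proof -
  note tri = assms(1)
  define N where "N = n + 3"
  define H where "H = HomM (n + 3) T \<alpha> \<alpha>'"
  define Z where "Z = HomM_zero T \<alpha> \<alpha>'"
  define U where "U = S \<inter> S'"
  define d where "d = M_dim T \<alpha>"
  define d' where "d' = M_dim T \<alpha>'"
  define f where "f = M_map T \<alpha>"
  define f' where "f' = M_map T \<alpha>'"
  have Sdef: "S = {i \<in> T. crosses i \<alpha>}" "S' = {i \<in> T. crosses i \<alpha>'}"
    unfolding S_def S'_def Supp_def by auto
  have UT: "U \<subseteq> T" unfolding U_def Sdef by auto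
  have dS: "\<And>i. d i = (if i \<in> S then 1 else 0)" unfolding d_def M_dim_def S_def by simp
  have dS': "\<And>i. d' i = (if i \<in> S' then 1 else 0)" unfolding d'_def M_dim_def S'_def by simp
  have fc: "\<And>j i. f j i \<in> carrier_mat (d i) (d j)" unfolding f_def d_def by (rule M_map_carrier)
  have fc': "\<And>j i. f' j i \<in> carrier_mat (d' i) (d' j)" unfolding f'_def d'_def by (rule M_map_carrier)
  have f1: "\<And>j i. j \<in> S \<Longrightarrow> i \<in> S \<Longrightarrow> f j i = 1\<^sub>m 1" unfolding f_def M_map_def S_def by simp
  have f1': "\<And>j i. j \<in> S' \<Longrightarrow> i \<in> S' \<Longrightarrow> f' j i = 1\<^sub>m 1" unfolding f'_def M_map_def S'_def by simp
  have hom: "\<And>\<phi>. \<phi> \<in> H \<longleftrightarrow> (\<forall>i\<in>T. \<phi> i \<in> carrier_mat (d' i) (d i)) \<and> (\<forall>i. i \<notin> T \<longrightarrow> \<phi> i = 0\<^sub>m 0 0) \<and>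
      (\<forall>i\<in>T. \<forall>j\<in>T. arrow N T j i \<longrightarrow> f' j i * \<phi> j = \<phi> i * f j i)"
    unfolding H_def HomM_def rep_Hom_def N_def d_def d'_def f_def f'_def by simp
  have carr: "\<phi> i \<in> carrier_mat (d' i) (d i)" if "\<phi> \<in> H" "i \<in> T" for \<phi> i
    using that hom by blast
  have Zd: "Z = (\<lambda>i. if i \<in> T then 0\<^sub>m (d' i) (d i) else 0\<^sub>m 0 0)"
    unfolding Z_def HomM_zero_def rep_Hom_zero_def d_def d'_def by simp
  have key: "\<phi> j = \<phi> i" if "\<phi> \<in> H" "j \<in> U" "i \<in> U" "arrow N T j i" for \<phi> i j
  proof -
    have jT: "j \<in> T" "i \<in> T" using that(2,3) UT by auto
    have "f' j i * \<phi> j = \<phi> i * f j i" using that(1,4) jT hom by blast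
    moreover have "\<phi> j \<in> carrier_mat (d' j) (d j)" "\<phi> i \<in> carrier_mat (d' i) (d i)"
      using that(1) jT hom by blast+
    moreover have "d' j = 1" "d j = 1" "d' i = 1" "d i = 1" using that(2,3) dS dS' unfolding U_def by auto
    ultimately show ?thesis using f1 f1' that unfolding U_def by auto
  qed
  have const: "\<phi> x = \<phi> y" if "\<phi> \<in> H" "x \<in> U" "y \<in> U" for \<phi> x y
  proof -
    have step: "\<phi> u = \<phi> v" if "(u,v) \<in> crel N T \<alpha> \<alpha>'" for u v
    proof -
      have uv: "u \<in> U" "v \<in> U" "u \<in> T" "v \<in> T" "adj N T u v"
        using that unfolding crel_def U_def Sdef by auto
      then have "arrow N T u v \<or> arrow N T v u" using adj_arrow by blast
      then show ?thesis using key[OF \<open>\<phi> \<in> H\<close>] uv by metis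
    qed
    have "(x,y) \<in> (crel N T \<alpha> \<alpha>')\<^sup>*"
      using connect[of N T x y \<alpha> \<alpha>'] tri that UT unfolding N_def U_def Sdef by auto
    then show ?thesis
      by (induction rule: rtrancl_induct) (auto dest: step)
  qed
  have notU: "\<phi> i = Z i" if "\<phi> \<in> H" "i \<in> T" "i \<notin> U" for \<phi> i
  proof -
    have "\<phi> i \<in> carrier_mat (d' i) (d i)" using that hom by blast
    moreover have "Z i \<in> carrier_mat (d' i) (d i)" using Zd that by simp
    moreover have "d' i = 0 \<or> d i = 0" using that dS dS' unfolding U_def by auto
    ultimately show ?thesis by (rule dim0_eq)
  qed
  have outT: "\<phi> i = Z i" if "\<phi> \<in> H" "i \<notin> T" for \<phi> i
    using that hom Zd by simp
  have ZH: "Z \<in> H"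
  proof -
    have "f' j i * Z j = Z i * f j i" if "i \<in> T" "j \<in> T" for i j
    proof -
      have "f' j i * Z j = 0\<^sub>m (d' i) (d j)" using that Zd right_mult_zero_mat[OF fc'] by simp
      moreover have "Z i * f j i = 0\<^sub>m (d' i) (d j)" using that Zd left_mult_zero_mat[OF fc] by simp
      ultimately show ?thesis by simp
    qed
    then show ?thesis unfolding hom using Zd by auto
  qed
  show ?thesis
  proof (cases "U \<noteq> {} \<and> \<not> (\<exists>j\<in>S - S'. \<exists>i\<in>U. arrow N T j i) \<and> \<not> (\<exists>j\<in>U. \<exists>i\<in>S' - S. arrow N T j i)")
    case True
    then obtain i0 where i0: "i0 \<in> U" by blast
    define \<psi> where "\<psi> = (\<lambda>i. if i \<in> U then 1\<^sub>m 1 else Z i)"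
    have \<psi>c: "\<psi> i \<in> carrier_mat (d' i) (d i)" if "i \<in> T" for i
      using that dS dS' Zd unfolding \<psi>_def U_def by auto
    have \<psi>H: "\<psi> \<in> H"
    proof -
      have "f' j i * \<psi> j = \<psi> i * f j i" if "i \<in> T" "j \<in> T" "arrow N T j i" for i j
      proof -
        have L: "f' j i * \<psi> j \<in> carrier_mat (d' i) (d j)" using mult_carrier_mat[OF fc' \<psi>c[OF that(2)]] .
        have R: "\<psi> i * f j i \<in> carrier_mat (d' i) (d j)" using mult_carrier_mat[OF \<psi>c[OF that(1)] fc] .
        show ?thesis
        proof (cases "d' i = 0 \<or> d j = 0")
          case True then show ?thesis using dim0_eq[OF L R] by blast
        next
          case False
          then have iS': "i \<in> S'" and jS: "j \<in> S" using dS dS' by (auto split: if_splits)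
          consider "j \<in> S' \<and> i \<in> S" | "j \<in> S' \<and> i \<notin> S" | "j \<notin> S' \<and> i \<in> S" | "j \<notin> S' \<and> i \<notin> S" by blast
          then show ?thesis
          proof cases
            case 1
            then have "i \<in> U" "j \<in> U" using iS' jS unfolding U_def by auto
            then show ?thesis using f1 f1' 1 iS' jS unfolding \<psi>_def by simp
          next
            case 2
            then have "j \<in> U" "i \<in> S' - S" using iS' jS unfolding U_def by auto
            then show ?thesis using True that by blast
          next
            case 3
            then have "i \<in> U" "j \<in> S - S'" using iS' jS unfolding U_def by auto
            then show ?thesis using True that by blast
          next
            case 4
            have a: "f' j i \<in> carrier_mat 1 0" using fc'[of j i] dS' 4 iS' by simp
            have b: "\<psi> j \<in> carrier_mat 0 1" using \<psi>c[OF that(2)] dS dS' 4 jS by simp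
            have c: "\<psi> i \<in> carrier_mat 1 0" using \<psi>c[OF that(1)] dS dS' 4 iS' by simp
            have e: "f j i \<in> carrier_mat 0 1" using fc[of j i] dS 4 jS by simp
            show ?thesis using mult_inner0[OF a b] mult_inner0[OF c e] by simp
          qed
        qed
      qed
      moreover have "\<psi> i = 0\<^sub>m 0 0" if "i \<notin> T" for i using that UT Zd unfolding \<psi>_def by auto
      ultimately show ?thesis unfolding hom using \<psi>c by auto
    qed
    have \<psi>Z: "\<psi> \<noteq> Z"
    proof
      assume "\<psi> = Z"
      then have "\<psi> i0 $$ (0,0) = Z i0 $$ (0,0)" by simp
      moreover have "d i0 = 1" "d' i0 = 1" using i0 dS dS' unfolding U_def by auto
      ultimately show False using i0 UT Zd unfolding \<psi>_def by auto
    qed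
    have sm: "(\<lambda>i. c \<cdot>\<^sub>m \<psi> i) \<in> H" for c
    proof -
      have "f' j i * (c \<cdot>\<^sub>m \<psi> j) = (c \<cdot>\<^sub>m \<psi> i) * f j i" if "i \<in> T" "j \<in> T" "arrow N T j i" for i j
      proof -
        have "f' j i * (c \<cdot>\<^sub>m \<psi> j) = c \<cdot>\<^sub>m (f' j i * \<psi> j)"
          by (rule mult_smult_distrib[OF fc' \<psi>c[OF that(2)]])
        moreover have "(c \<cdot>\<^sub>m \<psi> i) * f j i = c \<cdot>\<^sub>m (\<psi> i * f j i)"
          by (rule mult_smult_assoc_mat[OF \<psi>c[OF that(1)] fc])
        ultimately show ?thesis using \<psi>H hom that by metis
      qed
      moreover have "c \<cdot>\<^sub>m \<psi> i = 0\<^sub>m 0 0" if "i \<notin> T" for i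
        using that \<psi>H hom by (intro dim0_eq[of _ 0 0]) auto
      ultimately show ?thesis unfolding hom using \<psi>c by auto
    qed
    have every: "\<phi> = (\<lambda>i. (\<phi> i0 $$ (0,0)) \<cdot>\<^sub>m \<psi> i)" if "\<phi> \<in> H" for \<phi>
    proof
      fix i
      show "\<phi> i = (\<phi> i0 $$ (0,0)) \<cdot>\<^sub>m \<psi> i"
      proof (cases "i \<in> U")
        case True
        have "\<phi> i0 \<in> carrier_mat 1 1" using carr[OF that, of i0] i0 UT dS dS' unfolding U_def by auto
        then show ?thesis using const[OF that True i0] mat11 True unfolding \<psi>_def by metis
      next
        case False
        have "\<phi> i \<in> carrier_mat (d' i) (d i)" "(\<phi> i0 $$ (0,0)) \<cdot>\<^sub>m \<psi> i \<in> carrier_mat (d' i) (d i)"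
          if "i \<in> T" using that \<open>\<phi> \<in> H\<close> \<psi>c hom by auto
        moreover have "d' i = 0 \<or> d i = 0" using False dS dS' unfolding U_def by auto
        moreover have "\<phi> i = (\<phi> i0 $$ (0,0)) \<cdot>\<^sub>m \<psi> i" if "i \<notin> T"
          using that \<open>\<phi> \<in> H\<close> \<psi>H hom by (intro dim0_eq[of _ 0 0]) auto
        ultimately show ?thesis using dim0_eq by blast
      qed
    qed
    have "H \<noteq> {Z}" using \<psi>H \<psi>Z by blast
    moreover have "one_dimensional H Z"
      unfolding one_dimensional_def
    proof (intro bexI[of _ \<psi>] conjI)
      show "H = {(\<lambda>i. c \<cdot>\<^sub>m \<psi> i) | c. True}"
        using every sm by blast
    qed (use \<psi>H \<psi>Z in auto)
    ultimately show ?thesis using True unfolding H_def Z_def U_def N_def by blast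
  next
    case False
    have "H = {Z}"
    proof (intro equalityI subsetI)
      fix \<phi> assume ph: "\<phi> \<in> H"
      have U0: "\<phi> i = 0\<^sub>m 1 1" if iU: "i \<in> U" for i
      proof -
        have iT: "i \<in> T" using iU UT by blast
        consider "\<exists>j\<in>S - S'. \<exists>i\<in>U. arrow N T j i" | "\<exists>j\<in>U. \<exists>i\<in>S' - S. arrow N T j i"
          using False iU by blast
        then show ?thesis
        proof cases
          case 1
          then obtain j i1 where h: "j \<in> S - S'" "i1 \<in> U" "arrow N T j i1" by blast
          have T1: "j \<in> T" "i1 \<in> T" using h UT unfolding Sdef by auto
          have e: "f' j i1 * \<phi> j = \<phi> i1 * f j i1" using hom ph T1 h by blast
          have a: "f' j i1 \<in> carrier_mat 1 0" using fc'[of j i1] dS' h unfolding U_def by simp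
          have b: "\<phi> j \<in> carrier_mat 0 1" using carr[OF ph T1(1)] dS dS' h by simp
          have c: "\<phi> i1 \<in> carrier_mat 1 1" using carr[OF ph T1(2)] dS dS' h unfolding U_def by simp
          have "f j i1 = 1\<^sub>m 1" using f1 h unfolding U_def by auto
          then have "\<phi> i1 = 0\<^sub>m 1 1" using e mult_inner0[OF a b] c by simp
          then show ?thesis using const[OF ph iU h(2)] by simp
        next
          case 2
          then obtain j1 i where h: "j1 \<in> U" "i \<in> S' - S" "arrow N T j1 i" by blast
          have T1: "j1 \<in> T" "i \<in> T" using h UT unfolding Sdef by auto
          have e: "f' j1 i * \<phi> j1 = \<phi> i * f j1 i" using hom ph T1 h by blast
          have a: "\<phi> i \<in> carrier_mat 1 0" using carr[OF ph T1(2)] dS dS' h by simp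
          have b: "f j1 i \<in> carrier_mat 0 1" using fc[of j1 i] dS h unfolding U_def by simp
          have c: "\<phi> j1 \<in> carrier_mat 1 1" using carr[OF ph T1(1)] dS dS' h unfolding U_def by simp
          have "f' j1 i = 1\<^sub>m 1" using f1' h unfolding U_def by auto
          then have "\<phi> j1 = 0\<^sub>m 1 1" using e mult_inner0[OF a b] c by simp
          then show ?thesis using const[OF ph iU h(1)] by simp
        qed
      qed
      show "\<phi> \<in> {Z}"
      proof -
        have "\<phi> i = Z i" for i
        proof (cases "i \<in> T")
          case True
          show ?thesis
          proof (cases "i \<in> U")
            case True
            then have "d i = 1" "d' i = 1" using dS dS' unfolding U_def by auto
            then show ?thesis using U0[OF True] Zd \<open>i \<in> T\<close> by simp
          next
            case False
            then show ?thesis using notU ph \<open>i \<in> T\<close> by blast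
          qed
        next
          case False
          then show ?thesis using outT ph by blast
        qed
        then show ?thesis by auto
      qed
    next
      fix \<phi> assume "\<phi> \<in> {Z}" then show "\<phi> \<in> H" using ZH by simp
    qed
    then show ?thesis using False unfolding H_def Z_def U_def N_def by blast
  qed
qed

end
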